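(* Let $\psi$ be 1-Lipschitz with $|\psi(x)|\le|x|$. Let $\boldsymbol\theta^*\in\arg\min_{\eta_{\boldsymbol\theta}\in\mathcal F(L,\boldsymbol k,\boldsymbol s,\boldsymbol B)}\|\eta_{\boldsymbol\theta}-\eta_0\|_\infty^2$ and, for $\boldsymbol\theta=(\overline W_0,\dots,\overline W_L)$, let $\widetilde W_l=\sup_i\|\overline w_{li}-\overline w^*_{li}\|_1$. Set $c_{j-1}=\prod_{m=0}^{j-1}B_m$ (so $c_{-1}=1$). Then for any product density $q(\boldsymbol\theta)=\prod_{j=0}^Lq_j(\overline W_j)$, $$\int\|\eta_{\boldsymbol\theta}-\eta_{\boldsymbol\theta^*}\|_2^2q(\boldsymbol\theta)d\boldsymbol\theta\le\sum_{j=0}^Lc_{j-1}^2\,\mathbb E_q[\widetilde W_j^2]\prod_{m=j+1}^L\mathbb E_q[(\widetilde W_m+B_m)^2]$$ $$+2\sum_{j=0}^L\sum_{j'=0}^{j-1}c_{j-1}c_{j'-1}\,\mathbb E_q[\widetilde W_j(\widetilde W_j+B_j)]\prod_{m=j+1}^L\mathbb E_q[(\widetilde W_m+B_m)^2]\;\mathbb E_q[\widetilde W_{j'}]\prod_{m=j'+1}^{j-1}\mathbb E_q[\widetilde W_m+B_m].$$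
   Context: Depth $L\ge1$, widths $k_0=p,k_1,\dots,k_L$, $k_{L+1}=1$. For $\boldsymbol\theta=(\overline W_0,\dots,\overline W_L)$, $\overline W_l=(v_l,W_l)\in\mathbb R^{k_{l+1}\times(k_l+1)}$, $\eta_{\boldsymbol\theta}(x)=v_L+W_L\psi(v_{L-1}+W_{L-1}\psi(\cdots\psi(v_1+W_1\psi(v_0+W_0x))))$, $\psi$ applied coordinatewise. $\overline w_{lj}$ is the $j$-th row of $\overline W_l$ (and $\overline w^*_{lj}$ of $\overline W^*_l$), $\widetilde w_l=(\|\overline w_{l1}\|_1,\dots,\|\overline w_{lk_{l+1}}\|_1)$. For $\boldsymbol s,\boldsymbol B$ with $B_l\ge1$, $\mathcal F(L,\boldsymbol k,\boldsymbol s,\boldsymbol B)=\{\eta_{\boldsymbol\theta}:\|\widetilde w_l\|_0\le s_l,\ \|\widetilde w_l\|_\infty\le B_l,\ l=0,\dots,L\}$. $\eta_0:[0,1]^p\to\mathbb R$ is a given function; $\|\cdot\|_\infty$ is the sup norm over $[0,1]^p$ and $\|\cdot\|_2$ the $L^2$ norm with respect to Lebesgue (uniform) measure on $[0,1]^p$. $\mathbb E_q$ denotes expectation under $q$. *)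

theory Defs
  imports "HOL-Analysis.Analysis"
begin

text \<open>Parameters: a parameter vector theta is a function on triples (l,i,c):
  layer l (0..L), row i (< k (l+1)), column c (0..k l); column 0 is the bias
  entry v_l, columns 1..k l are the entries of W_l.\<close>

definition param_index :: "nat \<Rightarrow> (nat \<Rightarrow> nat) \<Rightarrow> (nat \<times> nat \<times> nat) set" where
  "param_index L k = {(l,i,c). l \<le> L \<and> i < k (Suc l) \<and> c \<le> k l}"

definition layer_index :: "(nat \<Rightarrow> nat) \<Rightarrow> nat \<Rightarrow> (nat \<times> nat) set" where
  "layer_index k l = {..<k (Suc l)} \<times> {..k l}"

definition param_measure :: "nat \<Rightarrow> (nat \<Rightarrow> nat) \<Rightarrow> ((nat \<times> nat \<times> nat) \<Rightarrow> real) measure" where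
  "param_measure L k = PiM (param_index L k) (\<lambda>_. lborel)"

definition layer_measure :: "(nat \<Rightarrow> nat) \<Rightarrow> nat \<Rightarrow> ((nat \<times> nat) \<Rightarrow> real) measure" where
  "layer_measure k l = PiM (layer_index k l) (\<lambda>_. lborel)"

definition layer :: "(nat \<Rightarrow> nat) \<Rightarrow> ((nat \<times> nat \<times> nat) \<Rightarrow> real) \<Rightarrow> nat \<Rightarrow> ((nat \<times> nat) \<Rightarrow> real)" where
  "layer k \<theta> l = restrict (\<lambda>(i,c). \<theta> (l,i,c)) (layer_index k l)"

fun pre :: "(real \<Rightarrow> real) \<Rightarrow> (nat \<Rightarrow> nat) \<Rightarrow> ((nat \<times> nat \<times> nat) \<Rightarrow> real)
             \<Rightarrow> (nat \<Rightarrow> real) \<Rightarrow> nat \<Rightarrow> nat \<Rightarrow> real" where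
  "pre \<psi> k \<theta> x 0 i = \<theta> (0,i,0) + (\<Sum>c<k 0. \<theta> (0,i,Suc c) * x c)"
| "pre \<psi> k \<theta> x (Suc l) i = \<theta> (Suc l,i,0) + (\<Sum>c<k (Suc l). \<theta> (Suc l,i,Suc c) * \<psi> (pre \<psi> k \<theta> x l c))"

text \<open>The network function eta_theta (output dimension k (L+1) = 1).\<close>
definition eta :: "(real \<Rightarrow> real) \<Rightarrow> nat \<Rightarrow> (nat \<Rightarrow> nat) \<Rightarrow> ((nat \<times> nat \<times> nat) \<Rightarrow> real)
                    \<Rightarrow> (nat \<Rightarrow> real) \<Rightarrow> real" where
  "eta \<psi> L k \<theta> x = pre \<psi> k \<theta> x L 0"

definition row_l1 :: "(nat \<Rightarrow> nat) \<Rightarrow> ((nat \<times> nat \<times> nat) \<Rightarrow> real) \<Rightarrow> nat \<Rightarrow> nat \<Rightarrow> real" where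
  "row_l1 k \<theta> l i = (\<Sum>c\<le>k l. \<bar>\<theta> (l,i,c)\<bar>)"

text \<open>Membership of eta_theta in F(L,k,s,B): theta is a parameter vector with
  ||w~_l||_0 \<le> s_l and ||w~_l||_inf \<le> B_l for l = 0..L.\<close>
definition in_F :: "nat \<Rightarrow> (nat \<Rightarrow> nat) \<Rightarrow> (nat \<Rightarrow> nat) \<Rightarrow> (nat \<Rightarrow> real)
                     \<Rightarrow> ((nat \<times> nat \<times> nat) \<Rightarrow> real) \<Rightarrow> bool" where
  "in_F L k s B \<theta> \<longleftrightarrow> \<theta> \<in> space (param_measure L k) \<and>
     (\<forall>l\<le>L. card {i\<in>{..<k (Suc l)}. row_l1 k \<theta> l i \<noteq> 0} \<le> s l \<and>
             (\<forall>i<k (Suc l). row_l1 k \<theta> l i \<le> B l))"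

definition cube :: "nat \<Rightarrow> (nat \<Rightarrow> real) set" where
  "cube p = {..<p} \<rightarrow>\<^sub>E {0..1}"

text \<open>Sup norm over [0,1]^p (in ennreal, so possibly infinite).\<close>
definition sup_dist :: "nat \<Rightarrow> ((nat \<Rightarrow> real) \<Rightarrow> real) \<Rightarrow> ((nat \<Rightarrow> real) \<Rightarrow> real) \<Rightarrow> ennreal" where
  "sup_dist p f g = (SUP x\<in>cube p. ennreal \<bar>f x - g x\<bar>)"

definition L2_dist_sq :: "nat \<Rightarrow> ((nat \<Rightarrow> real) \<Rightarrow> real) \<Rightarrow> ((nat \<Rightarrow> real) \<Rightarrow> real) \<Rightarrow> ennreal" where
  "L2_dist_sq p f g = (\<integral>\<^sup>+ x\<in>cube p. ennreal ((f x - g x)\<^sup>2) \<partial>(PiM {..<p} (\<lambda>_. lborel)))"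

definition Wdist :: "(nat \<Rightarrow> nat) \<Rightarrow> ((nat \<times> nat \<times> nat) \<Rightarrow> real) \<Rightarrow> nat
                      \<Rightarrow> ((nat \<times> nat \<times> nat) \<Rightarrow> real) \<Rightarrow> ennreal" where
  "Wdist k \<theta>s l \<theta> = (SUP i\<in>{..<k (Suc l)}. ennreal (\<Sum>c\<le>k l. \<bar>\<theta> (l,i,c) - \<theta>s (l,i,c)\<bar>))"

definition prod_density :: "nat \<Rightarrow> (nat \<Rightarrow> nat) \<Rightarrow> (nat \<Rightarrow> ((nat \<times> nat) \<Rightarrow> real) \<Rightarrow> real)
                             \<Rightarrow> ((nat \<times> nat \<times> nat) \<Rightarrow> real) \<Rightarrow> real" where
  "prod_density L k q \<theta> = (\<Prod>j\<le>L. q j (layer k \<theta> j))"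

definition Eq :: "nat \<Rightarrow> (nat \<Rightarrow> nat) \<Rightarrow> (nat \<Rightarrow> ((nat \<times> nat) \<Rightarrow> real) \<Rightarrow> real)
                   \<Rightarrow> (((nat \<times> nat \<times> nat) \<Rightarrow> real) \<Rightarrow> ennreal) \<Rightarrow> ennreal" where
  "Eq L k q f = (\<integral>\<^sup>+ \<theta>. f \<theta> * ennreal (prod_density L k q \<theta>) \<partial>(param_measure L k))"

end

theory Submission imports Defs begin

lemma psf_lborel: "product_sigma_finite (\<lambda>_::'i. lborel::real measure)"
  by (simp add: product_sigma_finite_def lborel.sigma_finite_measure_axioms)

lemma reindex_PiM_lborel:
  fixes f :: "'i \<Rightarrow> 'j"
  assumes fin: "finite I" and bij: "bij_betw f I K"
  shows "distr (PiM K (\<lambda>_. lborel::real measure)) (PiM I (\<lambda>_. lborel)) (\<lambda>\<omega>. \<lambda>n\<in>I. \<omega> (f n)) = PiM I (\<lambda>_. lborel)"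
proof -
  interpret P: product_sigma_finite "\<lambda>_::'i. lborel::real measure" by (rule psf_lborel)
  interpret Q: product_sigma_finite "\<lambda>_::'j. lborel::real measure" by (rule psf_lborel)
  have finK: "finite K" using bij fin bij_betw_finite by blast
  have fK: "\<And>n. n \<in> I \<Longrightarrow> f n \<in> K" using bij by (auto simp: bij_betw_def)
  have meas: "(\<lambda>\<omega>. \<lambda>n\<in>I. \<omega> (f n)) \<in> measurable (PiM K (\<lambda>_. lborel)) (PiM I (\<lambda>_. lborel::real measure))"
    by (rule measurable_restrict) (simp add: fK)
  show ?thesis
  proof (rule P.PiM_eqI[OF fin])
    show "sets (distr (PiM K (\<lambda>_. lborel::real measure)) (PiM I (\<lambda>_. lborel)) (\<lambda>\<omega>. \<lambda>n\<in>I. \<omega> (f n))) = sets (PiM I (\<lambda>_. lborel))"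
      by simp
    fix A assume A: "\<And>i. i\<in>I \<Longrightarrow> A i \<in> sets (lborel::real measure)"
    let ?g = "the_inv_into I f"
    have g1: "\<And>j. j \<in> K \<Longrightarrow> ?g j \<in> I" using bij by (metis bij_betw_def the_inv_into_into order_refl)
    have g2: "\<And>j. j \<in> K \<Longrightarrow> f (?g j) = j" using bij by (metis bij_betw_def f_the_inv_into_f)
    have g3: "\<And>n. n \<in> I \<Longrightarrow> ?g (f n) = n" using bij by (metis bij_betw_def the_inv_into_f_f)
    have pre: "(\<lambda>\<omega>. \<lambda>n\<in>I. \<omega> (f n)) -` PiE I A \<inter> space (PiM K (\<lambda>_. lborel)) = PiE K (\<lambda>j. A (?g j))"
    proof (intro set_eqI iffI)
      fix \<omega> assume "\<omega> \<in> (\<lambda>\<omega>. \<lambda>n\<in>I. \<omega> (f n)) -` PiE I A \<inter> space (PiM K (\<lambda>_. lborel))"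
      then have a: "\<And>n. n \<in> I \<Longrightarrow> \<omega> (f n) \<in> A n" and b: "\<omega> \<in> extensional K"
        by (auto simp: space_PiM PiE_iff)
      show "\<omega> \<in> PiE K (\<lambda>j. A (?g j))" using a[OF g1] g2 b by (auto simp: PiE_iff)
    next
      fix \<omega> assume "\<omega> \<in> PiE K (\<lambda>j. A (?g j))"
      then have a: "\<And>j. j \<in> K \<Longrightarrow> \<omega> j \<in> A (?g j)" and b: "\<omega> \<in> extensional K"
        by (auto simp: PiE_iff)
      show "\<omega> \<in> (\<lambda>\<omega>. \<lambda>n\<in>I. \<omega> (f n)) -` PiE I A \<inter> space (PiM K (\<lambda>_. lborel))"
        using a[OF fK] g3 b by (auto simp: space_PiM PiE_iff)
    qed
    have "emeasure (distr (PiM K (\<lambda>_. lborel::real measure)) (PiM I (\<lambda>_. lborel)) (\<lambda>\<omega>. \<lambda>n\<in>I. \<omega> (f n))) (PiE I A)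
        = emeasure (PiM K (\<lambda>_. lborel::real measure)) (PiE K (\<lambda>j. A (?g j)))"
      using A by (subst emeasure_distr[OF meas]) (auto simp: pre fin)
    also have "\<dots> = (\<Prod>j\<in>K. emeasure lborel (A (?g j)))"
      using A g1 by (subst Q.emeasure_PiM[OF finK]) auto
    also have "\<dots> = (\<Prod>n\<in>I. emeasure lborel (A n))"
      using bij g3 by (subst prod.reindex_bij_betw[symmetric, OF bij]) (auto intro!: prod.cong)
    finally show "emeasure (distr (PiM K (\<lambda>_. lborel::real measure)) (PiM I (\<lambda>_. lborel)) (\<lambda>\<omega>. \<lambda>n\<in>I. \<omega> (f n))) (PiE I A)
        = (\<Prod>n\<in>I. emeasure lborel (A n))" .
  qed
qed


lemma finite_layer_index[simp]: "finite (layer_index k j)"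
  by (simp add: layer_index_def)

lemma psf_layer: "product_sigma_finite (layer_measure k)"
  unfolding product_sigma_finite_def layer_measure_def
  by (intro allI product_sigma_finite.sigma_finite[OF psf_lborel] finite_layer_index)

definition blk :: "(nat \<Rightarrow> nat) \<Rightarrow> nat \<Rightarrow> (nat \<times> nat \<times> nat) set" where
  "blk k j = (\<lambda>(i,c). (j,i,c)) ` layer_index k j"

lemma blk_eq: "blk k j = Sigma {j} (layer_index k)"
  by (auto simp: blk_def)

lemma layer_restrict: "layer k y j = (\<lambda>n\<in>layer_index k j. y ((\<lambda>(i,c). (j,i,c)) n))"
  by (auto simp: layer_def restrict_def split_def)

lemma meas_layer:
  assumes "Sigma {j} (layer_index k) \<subseteq> I"
  shows "(\<lambda>\<theta>. layer k \<theta> j) \<in> measurable (PiM I (\<lambda>_. lborel::real measure)) (layer_measure k j)"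
  unfolding layer_restrict layer_measure_def
  by (rule measurable_restrict) (use assms in \<open>auto intro!: measurable_component_singleton\<close>)

lemma layer_block:
  assumes H: "H \<in> borel_measurable (layer_measure k j)"
  shows "(\<integral>\<^sup>+y. H (layer k y j) \<partial>PiM (blk k j) (\<lambda>_. lborel)) = (\<integral>\<^sup>+w. H w \<partial>layer_measure k j)"
proof -
  have bij: "bij_betw (\<lambda>(i,c). (j::nat,i::nat,c::nat)) (layer_index k j) (blk k j)"
    by (auto simp: bij_betw_def blk_def inj_on_def)
  note D = reindex_PiM_lborel[OF finite_layer_index bij]
  have m: "(\<lambda>\<omega>. \<lambda>n\<in>layer_index k j. \<omega> ((\<lambda>(i,c). (j,i,c)) n)) \<in> measurable (PiM (blk k j) (\<lambda>_. lborel::real measure)) (PiM (layer_index k j) (\<lambda>_. lborel))"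
    by (rule measurable_restrict) (auto simp: blk_def)
  show ?thesis
    unfolding layer_restrict
    using nn_integral_distr[OF m, of H] H D
    by (simp add: layer_measure_def)
qed


lemma block_integral:
  assumes "finite J"
  shows "F \<in> borel_measurable (PiM J (layer_measure k)) \<Longrightarrow>
   (\<integral>\<^sup>+\<theta>. F (\<lambda>j\<in>J. layer k \<theta> j) \<partial>PiM (Sigma J (layer_index k)) (\<lambda>_. lborel)) = (\<integral>\<^sup>+\<omega>. F \<omega> \<partial>PiM J (layer_measure k))"
using assms proof (induction J arbitrary: F rule: finite_induct)
  case empty
  interpret P: product_sigma_finite "\<lambda>_::nat\<times>nat\<times>nat. lborel::real measure" by (rule psf_lborel)
  interpret Q: product_sigma_finite "layer_measure k" by (rule psf_layer)
  show ?case by (simp add: P.nn_integral_empty Q.nn_integral_empty space_PiM_empty)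
next
  case (insert j J F)
  interpret P: product_sigma_finite "\<lambda>_::nat\<times>nat\<times>nat. lborel::real measure" by (rule psf_lborel)
  interpret Q: product_sigma_finite "layer_measure k" by (rule psf_layer)
  interpret S: sigma_finite_measure "layer_measure k j" by (rule Q.sigma_finite_measures)
  let ?SJ = "Sigma J (layer_index k)"
  have disj: "?SJ \<inter> blk k j = {}" using insert(2) by (auto simp: blk_def)
  have un: "Sigma (insert j J) (layer_index k) = ?SJ \<union> blk k j" by (auto simp: blk_def)
  have finS: "finite ?SJ" using insert(1) by auto
  have finB: "finite (blk k j)" by (simp add: blk_def)
  have mR: "(\<lambda>\<theta>. \<lambda>j'\<in>insert j J. layer k \<theta> j') \<in> measurable (PiM (?SJ \<union> blk k j) (\<lambda>_. lborel::real measure)) (PiM (insert j J) (layer_measure k))"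
    by (rule measurable_restrict, rule meas_layer) (auto simp: blk_def)
  have mF: "(\<lambda>\<theta>. F (\<lambda>j'\<in>insert j J. layer k \<theta> j')) \<in> borel_measurable (PiM (?SJ \<union> blk k j) (\<lambda>_. lborel))"
    using measurable_compose[OF mR insert.prems] .
  define G where "G \<omega> = (\<integral>\<^sup>+w. F (fun_upd \<omega> j w) \<partial>layer_measure k j)" for \<omega>
  have mG: "G \<in> borel_measurable (PiM J (layer_measure k))"
    unfolding G_def
    by (rule sigma_finite_measure.borel_measurable_nn_integral[OF Q.sigma_finite_measures])
       (use measurable_compose[OF measurable_add_dim insert.prems] in \<open>simp add: split_def fun_upd_def\<close>)
  have "(\<integral>\<^sup>+\<theta>. F (\<lambda>j'\<in>insert j J. layer k \<theta> j') \<partial>PiM (Sigma (insert j J) (layer_index k)) (\<lambda>_. lborel))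
      = (\<integral>\<^sup>+x. (\<integral>\<^sup>+y. F (\<lambda>j'\<in>insert j J. layer k (merge ?SJ (blk k j) (x,y)) j') \<partial>PiM (blk k j) (\<lambda>_. lborel)) \<partial>PiM ?SJ (\<lambda>_. lborel))"
    unfolding un by (rule P.product_nn_integral_fold[OF disj finS finB mF])
  also have "\<dots> = (\<integral>\<^sup>+x. G (\<lambda>j'\<in>J. layer k x j') \<partial>PiM ?SJ (\<lambda>_. lborel))"
  proof (rule nn_integral_cong)
    fix x assume x: "x \<in> space (PiM ?SJ (\<lambda>_. lborel::real measure))"
    let ?w = "\<lambda>j'\<in>J. layer k x j'"
    have eq: "(\<lambda>j'\<in>insert j J. layer k (merge ?SJ (blk k j) (x,y)) j') = ?w(j := layer k y j)" for y
      using insert(2) by (auto simp: layer_def restrict_def merge_def blk_def fun_eq_iff)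
    have wsp: "?w \<in> space (PiM J (layer_measure k))"
      by (auto simp: space_PiM layer_measure_def layer_def)
    have mH: "(\<lambda>w. F (?w(j:=w))) \<in> borel_measurable (layer_measure k j)"
      using measurable_compose[OF measurable_component_update[OF wsp insert(2)] insert.prems] .
    show "(\<integral>\<^sup>+y. F (\<lambda>j'\<in>insert j J. layer k (merge ?SJ (blk k j) (x,y)) j') \<partial>PiM (blk k j) (\<lambda>_. lborel)) = G ?w"
      unfolding eq G_def by (rule layer_block[OF mH])
  qed
  also have "\<dots> = (\<integral>\<^sup>+\<omega>. G \<omega> \<partial>PiM J (layer_measure k))"
    by (rule insert.IH[OF mG])
  also have "\<dots> = (\<integral>\<^sup>+\<omega>. F \<omega> \<partial>PiM (insert j J) (layer_measure k))"
    unfolding G_def by (rule Q.product_nn_integral_insert[symmetric, OF insert(1,2) insert.prems])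
  finally show ?case .
qed


lemma param_index_Sigma: "param_index L k = Sigma {..L} (layer_index k)"
  by (auto simp: param_index_def layer_index_def)

lemma meas_layer_param: "m \<le> L \<Longrightarrow> (\<lambda>\<theta>. layer k \<theta> m) \<in> measurable (param_measure L k) (layer_measure k m)"
  unfolding param_measure_def param_index_Sigma by (rule meas_layer) auto

lemma Eq_layers:
  assumes qm: "\<forall>j\<le>L. q j \<in> borel_measurable (layer_measure k j)"
    and \<Phi>: "\<Phi> \<in> borel_measurable (PiM {..L} (layer_measure k))"
  shows "Eq L k q (\<lambda>\<theta>. \<Phi> (\<lambda>j\<in>{..L}. layer k \<theta> j))
       = (\<integral>\<^sup>+\<omega>. \<Phi> \<omega> * ennreal (\<Prod>j\<le>L. q j (\<omega> j)) \<partial>PiM {..L} (layer_measure k))"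
proof -
  let ?F = "\<lambda>\<omega>. \<Phi> \<omega> * ennreal (\<Prod>j\<le>L. q j (\<omega> j))"
  have mq: "(\<lambda>\<omega>. \<Prod>j\<le>L. q j (\<omega> j)) \<in> borel_measurable (PiM {..L} (layer_measure k))"
    by (rule borel_measurable_prod, rule measurable_compose[OF measurable_component_singleton])
       (use qm in auto)
  have mF: "?F \<in> borel_measurable (PiM {..L} (layer_measure k))"
    by (intro borel_measurable_times_ennreal \<Phi> measurable_compose[OF mq measurable_ennreal])
  have "Eq L k q (\<lambda>\<theta>. \<Phi> (\<lambda>j\<in>{..L}. layer k \<theta> j))
      = (\<integral>\<^sup>+\<theta>. ?F (\<lambda>j\<in>{..L}. layer k \<theta> j) \<partial>PiM (Sigma {..L} (layer_index k)) (\<lambda>_. lborel))"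
    unfolding Eq_def prod_density_def param_measure_def param_index_Sigma
    by (rule nn_integral_cong) simp
  also have "\<dots> = (\<integral>\<^sup>+\<omega>. ?F \<omega> \<partial>PiM {..L} (layer_measure k))"
    by (rule block_integral[OF _ mF]) simp
  finally show ?thesis .
qed

lemma Eq_prod:
  assumes qm: "\<forall>j\<le>L. q j \<in> borel_measurable (layer_measure k j)"
    and qn: "\<forall>j\<le>L. \<forall>w. q j w \<ge> 0"
    and g: "\<And>j. j \<le> L \<Longrightarrow> g j \<in> borel_measurable (layer_measure k j)"
  shows "Eq L k q (\<lambda>\<theta>. \<Prod>j\<le>L. g j (layer k \<theta> j))
       = (\<Prod>j\<le>L. \<integral>\<^sup>+w. g j w * ennreal (q j w) \<partial>layer_measure k j)"
proof -
  interpret Q: product_sigma_finite "layer_measure k" by (rule psf_layer)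
  have mg: "(\<lambda>\<omega>. \<Prod>j\<le>L. g j (\<omega> j)) \<in> borel_measurable (PiM {..L} (layer_measure k))"
    by (rule borel_measurable_prod_ennreal, rule measurable_compose[OF measurable_component_singleton])
       (use g in auto)
  have "Eq L k q (\<lambda>\<theta>. \<Prod>j\<le>L. g j (layer k \<theta> j))
      = Eq L k q (\<lambda>\<theta>. (\<lambda>\<omega>. \<Prod>j\<le>L. g j (\<omega> j)) (\<lambda>j\<in>{..L}. layer k \<theta> j))"
    by simp
  also have "\<dots> = (\<integral>\<^sup>+\<omega>. (\<Prod>j\<le>L. g j (\<omega> j)) * ennreal (\<Prod>j\<le>L. q j (\<omega> j)) \<partial>PiM {..L} (layer_measure k))"
    by (rule Eq_layers[OF qm mg])
  also have "\<dots> = (\<integral>\<^sup>+\<omega>. (\<Prod>j\<le>L. g j (\<omega> j) * ennreal (q j (\<omega> j))) \<partial>PiM {..L} (layer_measure k))"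
  proof (intro nn_integral_cong)
    fix x
    have "(\<Prod>j\<le>L. ennreal (q j (x j))) = ennreal (\<Prod>j\<le>L. q j (x j))"
      using qn by (intro prod_ennreal) auto
    then show "(\<Prod>j\<le>L. g j (x j)) * ennreal (\<Prod>j\<le>L. q j (x j)) = (\<Prod>j\<le>L. g j (x j) * ennreal (q j (x j)))"
      by (simp add: prod.distrib)
  qed
  also have "\<dots> = (\<Prod>j\<le>L. \<integral>\<^sup>+w. g j w * ennreal (q j w) \<partial>layer_measure k j)"
    by (rule Q.product_nn_integral_prod)
       (use g qm in \<open>auto intro!: borel_measurable_times_ennreal measurable_compose[OF _ measurable_ennreal]\<close>)
  finally show ?thesis .
qed

lemma Eq_single:
  assumes qm: "\<forall>j\<le>L. q j \<in> borel_measurable (layer_measure k j)"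
    and qn: "\<forall>j\<le>L. \<forall>w. q j w \<ge> 0"
    and q1: "\<forall>j\<le>L. (\<integral>\<^sup>+ w. ennreal (q j w) \<partial>(layer_measure k j)) = 1"
    and j: "j \<le> L" and h: "h \<in> borel_measurable (layer_measure k j)"
  shows "Eq L k q (\<lambda>\<theta>. h (layer k \<theta> j)) = (\<integral>\<^sup>+w. h w * ennreal (q j w) \<partial>layer_measure k j)"
proof -
  define g where "g m w = (if m = j then h w else 1)" for m w
  have "Eq L k q (\<lambda>\<theta>. h (layer k \<theta> j)) = Eq L k q (\<lambda>\<theta>. \<Prod>m\<le>L. g m (layer k \<theta> m))"
    using j by (simp add: g_def prod.delta)
  also have "\<dots> = (\<Prod>m\<le>L. \<integral>\<^sup>+w. g m w * ennreal (q m w) \<partial>layer_measure k m)"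
    apply (rule Eq_prod[OF qm qn])
    subgoal for m by (cases "m = j") (use h in \<open>auto simp: g_def\<close>)
    done
  also have "\<dots> = (\<Prod>m\<le>L. if m = j then (\<integral>\<^sup>+w. h w * ennreal (q j w) \<partial>layer_measure k j) else 1)"
    using q1 by (intro prod.cong) (auto simp: g_def)
  also have "\<dots> = (\<integral>\<^sup>+w. h w * ennreal (q j w) \<partial>layer_measure k j)"
    using j by (simp add: prod.delta)
  finally show ?thesis .
qed

definition Wd :: "(nat \<Rightarrow> nat) \<Rightarrow> ((nat \<times> nat \<times> nat) \<Rightarrow> real) \<Rightarrow> nat \<Rightarrow> ((nat \<times> nat) \<Rightarrow> real) \<Rightarrow> ennreal" where
  "Wd k \<theta>s j w = (SUP i\<in>{..<k (Suc j)}. ennreal (\<Sum>c\<le>k j. \<bar>w (i,c) - \<theta>s (j,i,c)\<bar>))"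

lemma Wdist_Wd: "Wdist k \<theta>s j \<theta> = Wd k \<theta>s j (layer k \<theta> j)"
  unfolding Wdist_def Wd_def
  by (intro SUP_cong refl arg_cong[where f=ennreal] sum.cong) (auto simp: layer_def layer_index_def)

lemma Wd_meas: "Wd k \<theta>s j \<in> borel_measurable (layer_measure k j)"
  unfolding Wd_def
proof (rule borel_measurable_SUP)
  fix i assume i: "i \<in> {..<k (Suc j)}"
  show "(\<lambda>w. ennreal (\<Sum>c\<le>k j. \<bar>w (i,c) - \<theta>s (j,i,c)\<bar>)) \<in> borel_measurable (layer_measure k j)"
  proof (rule measurable_compose[OF _ measurable_ennreal], rule borel_measurable_sum)
    fix c assume c: "c \<in> {..k j}"
    have "(\<lambda>w. w (i,c)) \<in> measurable (layer_measure k j) lborel"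
      unfolding layer_measure_def
      by (rule measurable_component_singleton) (use i c in \<open>auto simp: layer_index_def\<close>)
    then have "(\<lambda>w. w (i,c)) \<in> borel_measurable (layer_measure k j)"
      by (metis measurable_cong_sets sets_lborel)
    then show "(\<lambda>w. \<bar>w (i,c) - \<theta>s (j,i,c)\<bar>) \<in> borel_measurable (layer_measure k j)"
      by measurable
  qed
qed simp


lemma lin_bound:
  fixes a y :: "nat \<Rightarrow> real"
  assumes y: "\<forall>c<n. \<bar>y c\<bar> \<le> M" and M: "M \<ge> 1"
  shows "\<bar>a 0 + (\<Sum>c<n. a (Suc c) * y c)\<bar> \<le> (\<Sum>c\<le>n. \<bar>a c\<bar>) * M"
proof -
  have "\<bar>\<Sum>c<n. a (Suc c) * y c\<bar> \<le> (\<Sum>c<n. \<bar>a (Suc c)\<bar> * M)"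
    by (rule order_trans[OF sum_abs], rule sum_mono) (use y in \<open>auto simp: abs_mult intro!: mult_left_mono\<close>)
  moreover have "\<bar>a 0\<bar> \<le> \<bar>a 0\<bar> * M" using M by (simp add: mult_le_cancel_left1)
  ultimately have "\<bar>a 0 + (\<Sum>c<n. a (Suc c) * y c)\<bar> \<le> \<bar>a 0\<bar> * M + (\<Sum>c<n. \<bar>a (Suc c)\<bar> * M)"
    by linarith
  also have "\<dots> = (\<Sum>c\<le>n. \<bar>a c\<bar>) * M"
    by (simp add: sum.atMost_shift sum_distrib_right distrib_right)
  finally show ?thesis .
qed

lemma lin_bound2:
  fixes a z :: "nat \<Rightarrow> real"
  assumes z: "\<forall>c<n. \<bar>z c\<bar> \<le> S" and S: "S \<ge> 0"
  shows "\<bar>\<Sum>c<n. a (Suc c) * z c\<bar> \<le> (\<Sum>c\<le>n. \<bar>a c\<bar>) * S"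
proof -
  have "\<bar>\<Sum>c<n. a (Suc c) * z c\<bar> \<le> (\<Sum>c<n. \<bar>a (Suc c)\<bar> * S)"
    by (rule order_trans[OF sum_abs], rule sum_mono) (use z in \<open>auto simp: abs_mult intro!: mult_left_mono\<close>)
  also have "\<dots> \<le> \<bar>a 0\<bar> * S + (\<Sum>c<n. \<bar>a (Suc c)\<bar> * S)" using S by simp
  also have "\<dots> = (\<Sum>c\<le>n. \<bar>a c\<bar>) * S"
    by (simp add: sum.atMost_shift sum_distrib_right distrib_right)
  finally show ?thesis .
qed

definition Sb :: "(nat \<Rightarrow> real) \<Rightarrow> (nat \<Rightarrow> real) \<Rightarrow> nat \<Rightarrow> real" where
  "Sb B w l = (\<Sum>j\<le>l. (\<Prod>m<j. B m) * w j * (\<Prod>m\<in>{Suc j..l}. (w m + B m)))"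

lemma Sb_0: "Sb B w 0 = w 0" by (simp add: Sb_def)

lemma Sb_Suc: "Sb B w (Suc l) = (\<Prod>m\<le>l. B m) * w (Suc l) + (w (Suc l) + B (Suc l)) * Sb B w l"
proof -
  have "Sb B w (Suc l) = (\<Sum>j\<le>l. (\<Prod>m<j. B m) * w j * (\<Prod>m\<in>{Suc j..Suc l}. (w m + B m)))
          + (\<Prod>m<Suc l. B m) * w (Suc l)"
    by (simp add: Sb_def)
  also have "(\<Sum>j\<le>l. (\<Prod>m<j. B m) * w j * (\<Prod>m\<in>{Suc j..Suc l}. (w m + B m)))
       = (\<Sum>j\<le>l. (\<Prod>m<j. B m) * w j * (\<Prod>m\<in>{Suc j..l}. (w m + B m)) * (w (Suc l) + B (Suc l)))"
    by (intro sum.cong) auto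
  finally show ?thesis
    by (simp add: Sb_def sum_distrib_right sum_distrib_left sum.distrib lessThan_Suc_atMost algebra_simps)
qed

lemma Sb_nonneg: "(\<forall>m\<le>l. w m \<ge> 0) \<Longrightarrow> (\<forall>m\<le>l. B m \<ge> 0) \<Longrightarrow> Sb B w l \<ge> 0"
  unfolding Sb_def by (intro sum_nonneg mult_nonneg_nonneg prod_nonneg) (auto intro: add_nonneg_nonneg)

lemma pre_bound:
  fixes w :: "nat \<Rightarrow> real" and \<theta> \<theta>s :: "nat \<times> nat \<times> nat \<Rightarrow> real"
  assumes B: "\<forall>l\<le>L. B l \<ge> 1"
    and lip: "\<forall>x y. \<bar>\<psi> x - \<psi> y\<bar> \<le> \<bar>x - y\<bar>"
    and psi_bd: "\<forall>x. \<bar>\<psi> x\<bar> \<le> \<bar>x\<bar>"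
    and rowB: "\<forall>l\<le>L. \<forall>i<k (Suc l). row_l1 k \<theta>s l i \<le> B l"
    and w: "\<forall>l\<le>L. \<forall>i<k (Suc l). (\<Sum>c\<le>k l. \<bar>\<theta> (l,i,c) - \<theta>s (l,i,c)\<bar>) \<le> w l"
    and w0: "\<forall>l. w l \<ge> 0"
    and x: "\<forall>c<k 0. \<bar>x c\<bar> \<le> 1"
  shows "l \<le> L \<Longrightarrow> \<forall>i<k (Suc l). \<bar>pre \<psi> k \<theta>s x l i\<bar> \<le> (\<Prod>m\<le>l. B m)
            \<and> \<bar>pre \<psi> k \<theta> x l i - pre \<psi> k \<theta>s x l i\<bar> \<le> Sb B w l"
proof (induction l)
  case 0
  show ?case
  proof (intro allI impI conjI)
    fix i assume i: "i < k (Suc 0)"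
    have "\<bar>pre \<psi> k \<theta>s x 0 i\<bar> \<le> row_l1 k \<theta>s 0 i * 1"
      using lin_bound[OF x, of "\<lambda>c. \<theta>s (0,i,c)"] by (simp add: row_l1_def)
    also have "\<dots> \<le> B 0" using rowB i by simp
    finally show "\<bar>pre \<psi> k \<theta>s x 0 i\<bar> \<le> (\<Prod>m\<le>0. B m)" by simp
    have "pre \<psi> k \<theta> x 0 i - pre \<psi> k \<theta>s x 0 i
        = (\<theta> (0,i,0) - \<theta>s (0,i,0)) + (\<Sum>c<k 0. (\<theta> (0,i,Suc c) - \<theta>s (0,i,Suc c)) * x c)"
      by (simp add: sum_subtractf algebra_simps)
    also have "\<bar>\<dots>\<bar> \<le> (\<Sum>c\<le>k 0. \<bar>\<theta> (0,i,c) - \<theta>s (0,i,c)\<bar>) * 1"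
      by (rule lin_bound[where a="\<lambda>c. \<theta> (0,i,c) - \<theta>s (0,i,c)", OF x]) simp
    also have "\<dots> \<le> w 0" using w i by simp
    finally show "\<bar>pre \<psi> k \<theta> x 0 i - pre \<psi> k \<theta>s x 0 i\<bar> \<le> Sb B w 0" by (simp add: Sb_0)
  qed
next
  case (Suc l)
  then have IH: "\<forall>i<k (Suc l). \<bar>pre \<psi> k \<theta>s x l i\<bar> \<le> (\<Prod>m\<le>l. B m)
            \<and> \<bar>pre \<psi> k \<theta> x l i - pre \<psi> k \<theta>s x l i\<bar> \<le> Sb B w l" by simp
  have P1: "(\<Prod>m\<le>l. B m) \<ge> 1" using B Suc.prems by (intro prod_ge_1) auto
  have S0: "Sb B w l \<ge> 0"
  proof (rule Sb_nonneg)
    show "\<forall>m\<le>l. B m \<ge> 0" using Suc.prems B by (metis le_trans order.trans zero_le_one Suc_leD)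
  qed (use w0 in auto)
  show ?case
  proof (intro allI impI conjI)
    fix i assume i: "i < k (Suc (Suc l))"
    let ?b = "\<lambda>c. pre \<psi> k \<theta>s x l c" and ?a = "\<lambda>c. pre \<psi> k \<theta> x l c"
    let ?P = "\<Prod>m\<le>l. B m"
    have yb: "\<forall>c<k (Suc l). \<bar>\<psi> (?b c)\<bar> \<le> ?P"
      using IH psi_bd by (meson order_trans)
    have "\<bar>pre \<psi> k \<theta>s x (Suc l) i\<bar> \<le> row_l1 k \<theta>s (Suc l) i * ?P"
      unfolding row_l1_def by simp (rule lin_bound[OF yb P1])
    also have "\<dots> \<le> B (Suc l) * ?P"
      using rowB i Suc.prems P1 by (intro mult_right_mono) auto
    finally show "\<bar>pre \<psi> k \<theta>s x (Suc l) i\<bar> \<le> (\<Prod>m\<le>Suc l. B m)"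
      by (simp add: mult.commute)
    let ?d = "\<lambda>c. \<theta> (Suc l,i,c) - \<theta>s (Suc l,i,c)"
    have split: "pre \<psi> k \<theta> x (Suc l) i - pre \<psi> k \<theta>s x (Suc l) i
        = (?d 0 + (\<Sum>c<k (Suc l). ?d (Suc c) * \<psi> (?b c)))
          + (\<Sum>c<k (Suc l). \<theta> (Suc l,i,Suc c) * (\<psi> (?a c) - \<psi> (?b c)))"
      by (simp add: sum_subtractf[symmetric] sum.distrib[symmetric] algebra_simps)
    have t1: "\<bar>?d 0 + (\<Sum>c<k (Suc l). ?d (Suc c) * \<psi> (?b c))\<bar> \<le> w (Suc l) * ?P"
    proof -
      have "\<bar>?d 0 + (\<Sum>c<k (Suc l). ?d (Suc c) * \<psi> (?b c))\<bar> \<le> (\<Sum>c\<le>k (Suc l). \<bar>?d c\<bar>) * ?P"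
        by (rule lin_bound[OF yb P1])
      also have "\<dots> \<le> w (Suc l) * ?P"
        using w i Suc.prems P1 by (intro mult_right_mono) auto
      finally show ?thesis .
    qed
    have za: "\<forall>c<k (Suc l). \<bar>\<psi> (?a c) - \<psi> (?b c)\<bar> \<le> Sb B w l"
      using IH lip by (meson order_trans)
    have rowt: "(\<Sum>c\<le>k (Suc l). \<bar>\<theta> (Suc l,i,c)\<bar>) \<le> w (Suc l) + B (Suc l)"
    proof -
      have "(\<Sum>c\<le>k (Suc l). \<bar>\<theta> (Suc l,i,c)\<bar>) \<le> (\<Sum>c\<le>k (Suc l). \<bar>?d c\<bar> + \<bar>\<theta>s (Suc l,i,c)\<bar>)"
        by (intro sum_mono) linarith
      also have "\<dots> = (\<Sum>c\<le>k (Suc l). \<bar>?d c\<bar>) + row_l1 k \<theta>s (Suc l) i"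
        by (simp add: sum.distrib row_l1_def)
      also have "\<dots> \<le> w (Suc l) + B (Suc l)"
        using w rowB i Suc.prems by (intro add_mono) auto
      finally show ?thesis .
    qed
    have t2: "\<bar>\<Sum>c<k (Suc l). \<theta> (Suc l,i,Suc c) * (\<psi> (?a c) - \<psi> (?b c))\<bar> \<le> (w (Suc l) + B (Suc l)) * Sb B w l"
    proof -
      have "\<bar>\<Sum>c<k (Suc l). \<theta> (Suc l,i,Suc c) * (\<psi> (?a c) - \<psi> (?b c))\<bar>
          \<le> (\<Sum>c\<le>k (Suc l). \<bar>\<theta> (Suc l,i,c)\<bar>) * Sb B w l"
        by (rule lin_bound2[OF za S0])
      also have "\<dots> \<le> (w (Suc l) + B (Suc l)) * Sb B w l"
        by (rule mult_right_mono[OF rowt S0])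
      finally show ?thesis .
    qed
    have "\<bar>pre \<psi> k \<theta> x (Suc l) i - pre \<psi> k \<theta>s x (Suc l) i\<bar>
        \<le> w (Suc l) * ?P + (w (Suc l) + B (Suc l)) * Sb B w l"
      unfolding split using t1 t2 abs_triangle_ineq by (smt (verit))
    then show "\<bar>pre \<psi> k \<theta> x (Suc l) i - pre \<psi> k \<theta>s x (Suc l) i\<bar> \<le> Sb B w (Suc l)"
      by (simp add: Sb_Suc mult.commute)
  qed
qed


lemma sum_sq_expand:
  fixes t :: "nat \<Rightarrow> 'a::comm_semiring_1"
  shows "(\<Sum>j\<le>L. t j)^2 = (\<Sum>j\<le>L. (t j)^2) + 2 * (\<Sum>j\<le>L. \<Sum>j'<j. t j * t j')"
proof (induction L)
  case 0 then show ?case by simp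
next
  case (Suc L)
  have "(\<Sum>j\<le>Suc L. t j)^2 = ((\<Sum>j\<le>L. t j) + t (Suc L))^2" by simp
  also have "\<dots> = (\<Sum>j\<le>L. t j)^2 + (t (Suc L))^2 + 2 * (t (Suc L) * (\<Sum>j\<le>L. t j))"
    by (simp add: power2_eq_square algebra_simps mult_2)
  also have "t (Suc L) * (\<Sum>j\<le>L. t j) = (\<Sum>j'<Suc L. t (Suc L) * t j')"
    by (simp add: sum_distrib_left lessThan_Suc_atMost)
  finally show ?case using Suc by (simp add: algebra_simps mult_2)
qed

lemma prod_split_atMost:
  fixes f :: "nat \<Rightarrow> 'a::comm_monoid_mult"
  assumes "j \<le> L"
  shows "prod f {..L} = prod f {..<j} * (f j * prod f {Suc j..L})"
proof -
  have eq: "{..L} = {..<j} \<union> insert j {Suc j..L}" using assms by auto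
  have "prod f {..L} = prod f ({..<j} \<union> insert j {Suc j..L})" by (simp only: eq)
  also have "\<dots> = prod f {..<j} * prod f (insert j {Suc j..L})" by (rule prod.union_disjoint) auto
  also have "prod f (insert j {Suc j..L}) = f j * prod f {Suc j..L}" by (rule prod.insert) auto
  finally show ?thesis .
qed

lemma prod_split_lessThan:
  fixes f :: "nat \<Rightarrow> 'a::comm_monoid_mult"
  assumes "j' < j"
  shows "prod f {..<j} = prod f {..<j'} * (f j' * prod f {Suc j'..<j})"
proof -
  have eq: "{..<j} = {..<j'} \<union> insert j' {Suc j'..<j}" using assms by auto
  have "prod f {..<j} = prod f ({..<j'} \<union> insert j' {Suc j'..<j})" by (simp only: eq)
  also have "\<dots> = prod f {..<j'} * prod f (insert j' {Suc j'..<j})" by (rule prod.union_disjoint) auto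
  also have "prod f (insert j' {Suc j'..<j}) = f j' * prod f {Suc j'..<j}" by (rule prod.insert) auto
  finally show ?thesis .
qed

lemma prod_split_ivl:
  fixes f :: "nat \<Rightarrow> 'a::comm_monoid_mult"
  assumes "j' < j" "j \<le> L"
  shows "prod f {Suc j'..L} = prod f {Suc j'..<j} * (f j * prod f {Suc j..L})"
proof -
  have eq: "{Suc j'..L} = {Suc j'..<j} \<union> insert j {Suc j..L}" using assms by auto
  have "prod f {Suc j'..L} = prod f ({Suc j'..<j} \<union> insert j {Suc j..L})" by (simp only: eq)
  also have "\<dots> = prod f {Suc j'..<j} * prod f (insert j {Suc j..L})" by (rule prod.union_disjoint) auto
  also have "prod f (insert j {Suc j..L}) = f j * prod f {Suc j..L}" by (rule prod.insert) auto
  finally show ?thesis .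
qed

definition G1 :: "(nat \<Rightarrow> 'a::comm_semiring_1) \<Rightarrow> (nat \<Rightarrow> 'a) \<Rightarrow> nat \<Rightarrow> nat \<Rightarrow> 'a" where
  "G1 a b j m = (if m < j then 1 else if m = j then (a m)^2 else (a m + b m)^2)"

definition G2 :: "(nat \<Rightarrow> 'a::comm_semiring_1) \<Rightarrow> (nat \<Rightarrow> 'a) \<Rightarrow> nat \<Rightarrow> nat \<Rightarrow> nat \<Rightarrow> 'a" where
  "G2 a b j j' m = (if m < j' then 1 else if m = j' then a m else if m < j then a m + b m
      else if m = j then a m * (a m + b m) else (a m + b m)^2)"

lemma sq_expand:
  fixes C a b :: "nat \<Rightarrow> 'a::comm_semiring_1"
  shows "(\<Sum>j\<le>L. C j * a j * (\<Prod>m\<in>{Suc j..L}. (a m + b m)))^2 =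
    (\<Sum>j\<le>L. (C j)^2 * (\<Prod>m\<le>L. G1 a b j m))
    + 2 * (\<Sum>j\<le>L. \<Sum>j'<j. C j * C j' * (\<Prod>m\<le>L. G2 a b j j' m))"
proof -
  let ?t = "\<lambda>j. C j * a j * (\<Prod>m\<in>{Suc j..L}. (a m + b m))"
  have e1: "(?t j)^2 = (C j)^2 * (\<Prod>m\<le>L. G1 a b j m)" if j: "j \<le> L" for j
  proof -
    have "(\<Prod>m\<le>L. G1 a b j m) = (\<Prod>m<j. G1 a b j m) * (G1 a b j j * (\<Prod>m\<in>{Suc j..L}. G1 a b j m))"
      by (rule prod_split_atMost[OF j])
    also have "(\<Prod>m<j. G1 a b j m) = 1" by (intro prod.neutral) (auto simp: G1_def)
    also have "(\<Prod>m\<in>{Suc j..L}. G1 a b j m) = (\<Prod>m\<in>{Suc j..L}. (a m + b m)^2)"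
      by (intro prod.cong) (auto simp: G1_def)
    finally show ?thesis
      by (simp add: G1_def power_mult_distrib prod_power_distrib mult.assoc)
  qed
  have e2: "?t j * ?t j' = C j * C j' * (\<Prod>m\<le>L. G2 a b j j' m)" if j: "j \<le> L" and jj: "j' < j" for j j'
  proof -
    have "(\<Prod>m\<le>L. G2 a b j j' m) = (\<Prod>m<j. G2 a b j j' m) * (G2 a b j j' j * (\<Prod>m\<in>{Suc j..L}. G2 a b j j' m))"
      by (rule prod_split_atMost[OF j])
    also have "(\<Prod>m<j. G2 a b j j' m) = (\<Prod>m<j'. G2 a b j j' m) * (G2 a b j j' j' * (\<Prod>m\<in>{Suc j'..<j}. G2 a b j j' m))"
      by (rule prod_split_lessThan[OF jj])
    also have "(\<Prod>m<j'. G2 a b j j' m) = 1" using jj by (intro prod.neutral) (auto simp: G2_def)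
    also have "(\<Prod>m\<in>{Suc j'..<j}. G2 a b j j' m) = (\<Prod>m\<in>{Suc j'..<j}. a m + b m)"
      using jj by (intro prod.cong) (auto simp: G2_def)
    also have "(\<Prod>m\<in>{Suc j..L}. G2 a b j j' m) = (\<Prod>m\<in>{Suc j..L}. (a m + b m)^2)"
      using jj by (intro prod.cong) (auto simp: G2_def)
    also have "G2 a b j j' j' = a j'" using jj by (simp add: G2_def)
    also have "G2 a b j j' j = a j * (a j + b j)" using jj by (simp add: G2_def)
    finally have *: "(\<Prod>m\<le>L. G2 a b j j' m) = a j' * (\<Prod>m\<in>{Suc j'..<j}. a m + b m) * (a j * (a j + b j)) * (\<Prod>m\<in>{Suc j..L}. (a m + b m))^2"
      by (simp add: prod_power_distrib mult_ac)
    have "(\<Prod>m\<in>{Suc j'..L}. (a m + b m)) = (\<Prod>m\<in>{Suc j'..<j}. a m + b m) * ((a j + b j) * (\<Prod>m\<in>{Suc j..L}. (a m + b m)))"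
      by (rule prod_split_ivl[OF jj j])
    then show ?thesis unfolding * by (simp add: power2_eq_square mult_ac)
  qed
  have "(\<Sum>j\<le>L. ?t j)^2 = (\<Sum>j\<le>L. (?t j)^2) + 2 * (\<Sum>j\<le>L. \<Sum>j'<j. ?t j * ?t j')"
    by (rule sum_sq_expand)
  also have "(\<Sum>j\<le>L. (?t j)^2) = (\<Sum>j\<le>L. (C j)^2 * (\<Prod>m\<le>L. G1 a b j m))"
    by (intro sum.cong) (auto simp: e1)
  also have "(\<Sum>j\<le>L. \<Sum>j'<j. ?t j * ?t j') = (\<Sum>j\<le>L. \<Sum>j'<j. C j * C j' * (\<Prod>m\<le>L. G2 a b j j' m))"
    by (intro sum.cong refl) (auto simp: e2)
  finally show ?thesis .
qed


lemma meas_density: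
  assumes qm: "\<forall>j\<le>L. q j \<in> borel_measurable (layer_measure k j)"
  shows "(\<lambda>\<theta>. ennreal (prod_density L k q \<theta>)) \<in> borel_measurable (param_measure L k)"
  unfolding prod_density_def
  by (rule measurable_compose[OF _ measurable_ennreal], rule borel_measurable_prod,
      rule measurable_compose[OF meas_layer_param]) (use qm in auto)

lemma Eq_add:
  assumes qm: "\<forall>j\<le>L. q j \<in> borel_measurable (layer_measure k j)"
    and f: "f \<in> borel_measurable (param_measure L k)" and g: "g \<in> borel_measurable (param_measure L k)"
  shows "Eq L k q (\<lambda>\<theta>. f \<theta> + g \<theta>) = Eq L k q f + Eq L k q g"
  unfolding Eq_def distrib_right
  by (rule nn_integral_add) (use meas_density[OF qm] f g in auto)

lemma Eq_cmult:
  assumes qm: "\<forall>j\<le>L. q j \<in> borel_measurable (layer_measure k j)"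
    and f: "f \<in> borel_measurable (param_measure L k)"
  shows "Eq L k q (\<lambda>\<theta>. c * f \<theta>) = c * Eq L k q f"
  unfolding Eq_def mult.assoc
  by (rule nn_integral_cmult) (use meas_density[OF qm] f in auto)

lemma Eq_sum:
  assumes qm: "\<forall>j\<le>L. q j \<in> borel_measurable (layer_measure k j)"
    and fin: "finite I" and f: "\<And>i. i \<in> I \<Longrightarrow> f i \<in> borel_measurable (param_measure L k)"
  shows "Eq L k q (\<lambda>\<theta>. \<Sum>i\<in>I. f i \<theta>) = (\<Sum>i\<in>I. Eq L k q (f i))"
  unfolding Eq_def sum_distrib_right
  by (rule nn_integral_sum) (use meas_density[OF qm] f in auto)

lemma Eq_mono:
  "(\<And>\<theta>. f \<theta> \<le> g \<theta>) \<Longrightarrow> Eq L k q f \<le> Eq L k q g"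
  unfolding Eq_def by (intro nn_integral_mono mult_right_mono) auto

lemma meas_prod_layers:
  fixes g :: "nat \<Rightarrow> (nat \<times> nat \<Rightarrow> real) \<Rightarrow> ennreal"
  assumes g: "\<And>m. m \<le> L \<Longrightarrow> g m \<in> borel_measurable (layer_measure k m)"
  shows "(\<lambda>\<theta>. \<Prod>m\<le>L. g m (layer k \<theta> m)) \<in> borel_measurable (param_measure L k)"
  by (rule borel_measurable_prod_ennreal, rule measurable_compose[OF meas_layer_param]) (use g in auto)

lemma prodG1:
  fixes x y :: "nat \<Rightarrow> 'a::comm_monoid_mult"
  assumes "j \<le> L"
  shows "(\<Prod>m\<le>L. if m < j then 1 else if m = j then x m else y m) = x j * (\<Prod>m\<in>{Suc j..L}. y m)"
proof -
  let ?f = "\<lambda>m. if m < j then 1 else if m = j then x m else y m"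
  have "prod ?f {..L} = prod ?f {..<j} * (?f j * prod ?f {Suc j..L})" by (rule prod_split_atMost[OF assms])
  also have "prod ?f {..<j} = 1" by (intro prod.neutral) auto
  also have "prod ?f {Suc j..L} = (\<Prod>m\<in>{Suc j..L}. y m)" by (intro prod.cong) auto
  finally show ?thesis by simp
qed

lemma prodG2:
  fixes u v x y :: "nat \<Rightarrow> 'a::comm_monoid_mult"
  assumes jj: "j' < j" and j: "j \<le> L"
  shows "(\<Prod>m\<le>L. if m < j' then 1 else if m = j' then u m else if m < j then v m
      else if m = j then x m else y m) = u j' * (\<Prod>m\<in>{Suc j'..<j}. v m) * (x j * (\<Prod>m\<in>{Suc j..L}. y m))"
proof -
  let ?f = "\<lambda>m. if m < j' then 1 else if m = j' then u m else if m < j then v m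
      else if m = j then x m else y m"
  have "prod ?f {..L} = prod ?f {..<j} * (?f j * prod ?f {Suc j..L})" by (rule prod_split_atMost[OF j])
  also have "prod ?f {..<j} = prod ?f {..<j'} * (?f j' * prod ?f {Suc j'..<j})" by (rule prod_split_lessThan[OF jj])
  also have "prod ?f {..<j'} = 1" by (intro prod.neutral) auto
  also have "prod ?f {Suc j'..<j} = (\<Prod>m\<in>{Suc j'..<j}. v m)" using jj by (intro prod.cong) auto
  also have "prod ?f {Suc j..L} = (\<Prod>m\<in>{Suc j..L}. y m)" using jj by (intro prod.cong) auto
  finally show ?thesis using jj by simp
qed

lemma cube_measure: "emeasure (PiM {..<p} (\<lambda>_. lborel::real measure)) (cube p) = 1"
proof -
  interpret P: product_sigma_finite "\<lambda>_::nat. lborel::real measure" by (rule psf_lborel)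
  have "cube p = PiE {..<p} (\<lambda>_. {0..1})" by (simp add: cube_def)
  then show ?thesis by (simp add: P.emeasure_PiM)
qed

lemma cube_sets: "cube p \<in> sets (PiM {..<p} (\<lambda>_. lborel::real measure))"
  unfolding cube_def by (rule sets_PiM_I_finite) auto


lemma ennreal_Sb:
  assumes w0: "\<forall>m. w m \<ge> 0" and B0: "\<forall>m\<le>L. B m \<ge> 0"
  shows "ennreal (Sb B w L) = (\<Sum>j\<le>L. ennreal (\<Prod>m<j. B m) * ennreal (w j) * (\<Prod>m\<in>{Suc j..L}. (ennreal (w m) + ennreal (B m))))"
proof -
  have t: "ennreal ((\<Prod>m<j. B m) * w j * (\<Prod>m\<in>{Suc j..L}. (w m + B m)))
     = ennreal (\<Prod>m<j. B m) * ennreal (w j) * (\<Prod>m\<in>{Suc j..L}. (ennreal (w m) + ennreal (B m)))"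
    if j: "j \<le> L" for j
  proof -
    have p1: "(\<Prod>m<j. B m) \<ge> 0" using B0 j by (intro prod_nonneg) auto
    have p2: "(\<Prod>m\<in>{Suc j..L}. (w m + B m)) \<ge> 0" using B0 w0 by (intro prod_nonneg) (auto intro: add_nonneg_nonneg)
    have "ennreal (\<Prod>m\<in>{Suc j..L}. (w m + B m)) = (\<Prod>m\<in>{Suc j..L}. ennreal (w m + B m))"
      using B0 w0 by (intro prod_ennreal[symmetric]) (auto intro: add_nonneg_nonneg)
    also have "\<dots> = (\<Prod>m\<in>{Suc j..L}. (ennreal (w m) + ennreal (B m)))"
      using B0 w0 by (intro prod.cong refl ennreal_plus) auto
    finally show ?thesis using p1 p2 w0 by (simp add: ennreal_mult)
  qed
  have "ennreal (Sb B w L) = (\<Sum>j\<le>L. ennreal ((\<Prod>m<j. B m) * w j * (\<Prod>m\<in>{Suc j..L}. (w m + B m))))"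
    unfolding Sb_def using B0 w0
    by (intro sum_ennreal[symmetric] mult_nonneg_nonneg prod_nonneg) (auto intro: add_nonneg_nonneg)
  also have "\<dots> = (\<Sum>j\<le>L. ennreal (\<Prod>m<j. B m) * ennreal (w j) * (\<Prod>m\<in>{Suc j..L}. (ennreal (w m) + ennreal (B m))))"
    by (intro sum.cong refl t) auto
  finally show ?thesis .
qed

lemma pointwise:
  assumes k0: "k 0 = p" and kL: "k (Suc L) = 1"
    and B: "\<forall>l\<le>L. B l \<ge> 1"
    and lip: "\<forall>x y. \<bar>\<psi> x - \<psi> y\<bar> \<le> \<bar>x - y\<bar>"
    and psi_bd: "\<forall>x. \<bar>\<psi> x\<bar> \<le> \<bar>x\<bar>"
    and rowB: "\<forall>l\<le>L. \<forall>i<k (Suc l). row_l1 k \<theta>s l i \<le> B l"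
  shows "L2_dist_sq p (eta \<psi> L k \<theta>) (eta \<psi> L k \<theta>s) \<le>
     (\<Sum>j\<le>L. ennreal (\<Prod>m<j. B m) * Wdist k \<theta>s j \<theta> * (\<Prod>m\<in>{Suc j..L}. (Wdist k \<theta>s m \<theta> + ennreal (B m))))^2"
proof -
  define w where "w m = enn2real (Wdist k \<theta>s m \<theta>)" for m
  have fin: "Wdist k \<theta>s m \<theta> < top" for m
  proof -
    have "Wdist k \<theta>s m \<theta> \<le> ennreal (\<Sum>i<k (Suc m). \<Sum>c\<le>k m. \<bar>\<theta> (m,i,c) - \<theta>s (m,i,c)\<bar>)"
      unfolding Wdist_def
      by (intro SUP_least ennreal_leI member_le_sum[where f="\<lambda>i. \<Sum>c\<le>k m. \<bar>\<theta> (m,i,c) - \<theta>s (m,i,c)\<bar>"] sum_nonneg) auto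
    then show ?thesis using order.strict_trans1 by fastforce
  qed
  have Ww: "Wdist k \<theta>s m \<theta> = ennreal (w m)" for m using fin[of m] by (simp add: w_def)
  have w0: "\<forall>m. w m \<ge> 0" by (simp add: w_def)
  have wb: "\<forall>l\<le>L. \<forall>i<k (Suc l). (\<Sum>c\<le>k l. \<bar>\<theta> (l,i,c) - \<theta>s (l,i,c)\<bar>) \<le> w l"
  proof (intro allI impI)
    fix l i assume "l \<le> L" "i < k (Suc l)"
    then have "ennreal (\<Sum>c\<le>k l. \<bar>\<theta> (l,i,c) - \<theta>s (l,i,c)\<bar>) \<le> Wdist k \<theta>s l \<theta>"
      unfolding Wdist_def by (intro SUP_upper) auto
    then show "(\<Sum>c\<le>k l. \<bar>\<theta> (l,i,c) - \<theta>s (l,i,c)\<bar>) \<le> w l"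
      unfolding Ww using w0 by simp
  qed
  have B0: "\<forall>m\<le>L. B m \<ge> 0" using B by (meson order.trans zero_le_one)
  let ?S = "Sb B w L"
  have S0: "?S \<ge> 0" using w0 B0 by (intro Sb_nonneg) auto
  have pt: "(eta \<psi> L k \<theta> x - eta \<psi> L k \<theta>s x)^2 \<le> ?S^2" if x: "x \<in> cube p" for x
  proof -
    have xb: "\<forall>c<k 0. \<bar>x c\<bar> \<le> 1" using x k0 by (auto simp: cube_def PiE_iff)
    have "\<bar>eta \<psi> L k \<theta> x - eta \<psi> L k \<theta>s x\<bar> \<le> ?S"
      using pre_bound[OF B lip psi_bd rowB wb w0 xb, of L] kL by (simp add: eta_def)
    then have "\<bar>eta \<psi> L k \<theta> x - eta \<psi> L k \<theta>s x\<bar>^2 \<le> ?S^2"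
      by (intro power_mono) auto
    then show ?thesis by simp
  qed
  have "L2_dist_sq p (eta \<psi> L k \<theta>) (eta \<psi> L k \<theta>s)
      \<le> (\<integral>\<^sup>+x. ennreal (?S^2) * indicator (cube p) x \<partial>PiM {..<p} (\<lambda>_. lborel))"
    unfolding L2_dist_sq_def
    by (intro nn_integral_mono) (auto split: split_indicator intro!: ennreal_leI pt)
  also have "\<dots> = ennreal (?S^2)"
    by (simp add: nn_integral_cmult_indicator[OF cube_sets] cube_measure)
  also have "\<dots> = (ennreal ?S)^2" using S0 by (simp add: ennreal_power)
  also have "ennreal ?S = (\<Sum>j\<le>L. ennreal (\<Prod>m<j. B m) * Wdist k \<theta>s j \<theta> * (\<Prod>m\<in>{Suc j..L}. (Wdist k \<theta>s m \<theta> + ennreal (B m))))"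
    unfolding Ww by (rule ennreal_Sb[OF w0 B0])
  finally show ?thesis .
qed


theorem lemmaA5:
  fixes \<psi> :: "real \<Rightarrow> real"
    and L p :: nat and k s :: "nat \<Rightarrow> nat" and B :: "nat \<Rightarrow> real"
    and \<eta>0 :: "(nat \<Rightarrow> real) \<Rightarrow> real"
    and \<theta>s :: "(nat \<times> nat \<times> nat) \<Rightarrow> real"
    and q :: "nat \<Rightarrow> ((nat \<times> nat) \<Rightarrow> real) \<Rightarrow> real"
  assumes L: "L \<ge> 1"
    and k0: "k 0 = p" and kL: "k (Suc L) = 1" and kpos: "\<forall>l\<le>Suc L. k l \<ge> 1"
    and B: "\<forall>l\<le>L. B l \<ge> 1"
    and lip: "\<forall>x y. \<bar>\<psi> x - \<psi> y\<bar> \<le> \<bar>x - y\<bar>"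
    and psi_bd: "\<forall>x. \<bar>\<psi> x\<bar> \<le> \<bar>x\<bar>"
    and \<theta>s_F: "in_F L k s B \<theta>s"
    and \<theta>s_min: "\<forall>\<theta>. in_F L k s B \<theta> \<longrightarrow>
        (sup_dist p (eta \<psi> L k \<theta>s) \<eta>0)\<^sup>2 \<le> (sup_dist p (eta \<psi> L k \<theta>) \<eta>0)\<^sup>2"
    and q_meas: "\<forall>j\<le>L. q j \<in> borel_measurable (layer_measure k j)"
    and q_nonneg: "\<forall>j\<le>L. \<forall>w. q j w \<ge> 0"
    and q_norm: "\<forall>j\<le>L. (\<integral>\<^sup>+ w. ennreal (q j w) \<partial>(layer_measure k j)) = 1"
  shows "Eq L k q (\<lambda>\<theta>. L2_dist_sq p (eta \<psi> L k \<theta>) (eta \<psi> L k \<theta>s))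
    \<le> (\<Sum>j\<le>L. (ennreal (\<Prod>m<j. B m))\<^sup>2 * Eq L k q (\<lambda>\<theta>. (Wdist k \<theta>s j \<theta>)\<^sup>2)
            * (\<Prod>m\<in>{Suc j..L}. Eq L k q (\<lambda>\<theta>. (Wdist k \<theta>s m \<theta> + ennreal (B m))\<^sup>2)))
     + 2 * (\<Sum>j\<le>L. \<Sum>j'<j. ennreal (\<Prod>m<j. B m) * ennreal (\<Prod>m<j'. B m)
            * Eq L k q (\<lambda>\<theta>. Wdist k \<theta>s j \<theta> * (Wdist k \<theta>s j \<theta> + ennreal (B j)))
            * (\<Prod>m\<in>{Suc j..L}. Eq L k q (\<lambda>\<theta>. (Wdist k \<theta>s m \<theta> + ennreal (B m))\<^sup>2))
            * Eq L k q (\<lambda>\<theta>. Wdist k \<theta>s j' \<theta>)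
            * (\<Prod>m\<in>{Suc j'..<j}. Eq L k q (\<lambda>\<theta>. Wdist k \<theta>s m \<theta> + ennreal (B m))))"
proof -
  have rowB: "\<forall>l\<le>L. \<forall>i<k (Suc l). row_l1 k \<theta>s l i \<le> B l" using \<theta>s_F by (simp add: in_F_def)
  define Cc where "Cc j = ennreal (\<Prod>m<j. B m)" for j
  define g1 where "g1 j m w = (if m < j then 1 else if m = j then (Wd k \<theta>s m w)^2
      else (Wd k \<theta>s m w + ennreal (B m))^2)" for j m w
  define g2 where "g2 j j' m w = (if m < j' then 1 else if m = j' then Wd k \<theta>s m w
      else if m < j then Wd k \<theta>s m w + ennreal (B m)
      else if m = j then Wd k \<theta>s m w * (Wd k \<theta>s m w + ennreal (B m))
      else (Wd k \<theta>s m w + ennreal (B m))^2)" for j j' m w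
  note Wd_meas[measurable]
  have g1m: "g1 j m \<in> borel_measurable (layer_measure k m)" for j m
    unfolding g1_def by measurable
  have g2m: "g2 j j' m \<in> borel_measurable (layer_measure k m)" for j j' m
    unfolding g2_def by measurable
  have P1m: "(\<lambda>\<theta>. \<Prod>m\<le>L. g1 j m (layer k \<theta> m)) \<in> borel_measurable (param_measure L k)" for j
    by (rule meas_prod_layers[OF g1m])
  have P2m: "(\<lambda>\<theta>. \<Prod>m\<le>L. g2 j j' m (layer k \<theta> m)) \<in> borel_measurable (param_measure L k)" for j j'
    by (rule meas_prod_layers[OF g2m])
  have X: "(\<Sum>j\<le>L. Cc j * Wdist k \<theta>s j \<theta> * (\<Prod>m\<in>{Suc j..L}. (Wdist k \<theta>s m \<theta> + ennreal (B m))))^2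
      = (\<Sum>j\<le>L. (Cc j)^2 * (\<Prod>m\<le>L. g1 j m (layer k \<theta> m)))
        + 2 * (\<Sum>j\<le>L. \<Sum>j'<j. Cc j * Cc j' * (\<Prod>m\<le>L. g2 j j' m (layer k \<theta> m)))" for \<theta>
    using sq_expand[of Cc "\<lambda>m. Wdist k \<theta>s m \<theta>" "\<lambda>m. ennreal (B m)" L]
    by (simp add: G1_def G2_def g1_def g2_def Wdist_Wd)
  have EW: "Eq L k q (\<lambda>\<theta>. h (Wdist k \<theta>s m \<theta>)) = (\<integral>\<^sup>+w. h (Wd k \<theta>s m w) * ennreal (q m w) \<partial>layer_measure k m)"
    if "m \<le> L" "(\<lambda>w. h (Wd k \<theta>s m w)) \<in> borel_measurable (layer_measure k m)" for m h
    unfolding Wdist_Wd by (rule Eq_single[OF q_meas q_nonneg q_norm that(1,2)])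
  have EWa: "Eq L k q (\<lambda>\<theta>. (Wdist k \<theta>s m \<theta>)\<^sup>2) = (\<integral>\<^sup>+w. (Wd k \<theta>s m w)\<^sup>2 * ennreal (q m w) \<partial>layer_measure k m)"
    if "m \<le> L" for m
    by (rule EW[OF that, where h="\<lambda>t. t\<^sup>2"]) measurable
  have EWb: "Eq L k q (\<lambda>\<theta>. (Wdist k \<theta>s m \<theta> + ennreal (B m))\<^sup>2) = (\<integral>\<^sup>+w. (Wd k \<theta>s m w + ennreal (B m))\<^sup>2 * ennreal (q m w) \<partial>layer_measure k m)"
    if "m \<le> L" for m
    by (rule EW[OF that, where h="\<lambda>t. (t + ennreal (B m))\<^sup>2"]) measurable
  have EWc: "Eq L k q (\<lambda>\<theta>. Wdist k \<theta>s m \<theta>) = (\<integral>\<^sup>+w. Wd k \<theta>s m w * ennreal (q m w) \<partial>layer_measure k m)"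
    if "m \<le> L" for m
    by (rule EW[OF that, where h="\<lambda>t. t"]) measurable
  have EWd: "Eq L k q (\<lambda>\<theta>. Wdist k \<theta>s m \<theta> + ennreal (B m)) = (\<integral>\<^sup>+w. (Wd k \<theta>s m w + ennreal (B m)) * ennreal (q m w) \<partial>layer_measure k m)"
    if "m \<le> L" for m
    by (rule EW[OF that, where h="\<lambda>t. t + ennreal (B m)"]) measurable
  have EWe: "Eq L k q (\<lambda>\<theta>. Wdist k \<theta>s m \<theta> * (Wdist k \<theta>s m \<theta> + ennreal (B m))) = (\<integral>\<^sup>+w. (Wd k \<theta>s m w * (Wd k \<theta>s m w + ennreal (B m))) * ennreal (q m w) \<partial>layer_measure k m)"
    if "m \<le> L" for m
    by (rule EW[OF that, where h="\<lambda>t. t * (t + ennreal (B m))"]) measurable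
  have E1: "(\<integral>\<^sup>+w. 1 * ennreal (q m w) \<partial>layer_measure k m) = 1" if "m \<le> L" for m
    using q_norm that by simp
  have T1: "Eq L k q (\<lambda>\<theta>. \<Prod>m\<le>L. g1 j m (layer k \<theta> m))
     = Eq L k q (\<lambda>\<theta>. (Wdist k \<theta>s j \<theta>)\<^sup>2) * (\<Prod>m\<in>{Suc j..L}. Eq L k q (\<lambda>\<theta>. (Wdist k \<theta>s m \<theta> + ennreal (B m))\<^sup>2))"
    if j: "j \<le> L" for j
  proof -
    have "Eq L k q (\<lambda>\<theta>. \<Prod>m\<le>L. g1 j m (layer k \<theta> m)) = (\<Prod>m\<le>L. \<integral>\<^sup>+w. g1 j m w * ennreal (q m w) \<partial>layer_measure k m)"
      by (rule Eq_prod[OF q_meas q_nonneg g1m])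
    also have "\<dots> = (\<Prod>m\<le>L. if m < j then 1 else if m = j then Eq L k q (\<lambda>\<theta>. (Wdist k \<theta>s m \<theta>)\<^sup>2)
        else Eq L k q (\<lambda>\<theta>. (Wdist k \<theta>s m \<theta> + ennreal (B m))\<^sup>2))"
    proof (rule prod.cong[OF refl])
      fix m assume m: "m \<in> {..L}"
      show "(\<integral>\<^sup>+w. g1 j m w * ennreal (q m w) \<partial>layer_measure k m) = (if m < j then 1 else if m = j then Eq L k q (\<lambda>\<theta>. (Wdist k \<theta>s m \<theta>)\<^sup>2)
        else Eq L k q (\<lambda>\<theta>. (Wdist k \<theta>s m \<theta> + ennreal (B m))\<^sup>2))"
        using m q_norm by (auto simp: g1_def EWa EWb)
    qed
    also have "\<dots> = Eq L k q (\<lambda>\<theta>. (Wdist k \<theta>s j \<theta>)\<^sup>2) * (\<Prod>m\<in>{Suc j..L}. Eq L k q (\<lambda>\<theta>. (Wdist k \<theta>s m \<theta> + ennreal (B m))\<^sup>2))"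
      by (rule prodG1[OF j])
    finally show ?thesis .
  qed
  have T2: "Eq L k q (\<lambda>\<theta>. \<Prod>m\<le>L. g2 j j' m (layer k \<theta> m))
     = Eq L k q (\<lambda>\<theta>. Wdist k \<theta>s j' \<theta>) * (\<Prod>m\<in>{Suc j'..<j}. Eq L k q (\<lambda>\<theta>. Wdist k \<theta>s m \<theta> + ennreal (B m)))
       * (Eq L k q (\<lambda>\<theta>. Wdist k \<theta>s j \<theta> * (Wdist k \<theta>s j \<theta> + ennreal (B j)))
          * (\<Prod>m\<in>{Suc j..L}. Eq L k q (\<lambda>\<theta>. (Wdist k \<theta>s m \<theta> + ennreal (B m))\<^sup>2)))"
    if j: "j \<le> L" and jj: "j' < j" for j j'
  proof -
    have "Eq L k q (\<lambda>\<theta>. \<Prod>m\<le>L. g2 j j' m (layer k \<theta> m)) = (\<Prod>m\<le>L. \<integral>\<^sup>+w. g2 j j' m w * ennreal (q m w) \<partial>layer_measure k m)"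
      by (rule Eq_prod[OF q_meas q_nonneg g2m])
    also have "\<dots> = (\<Prod>m\<le>L. if m < j' then 1 else if m = j' then Eq L k q (\<lambda>\<theta>. Wdist k \<theta>s m \<theta>)
        else if m < j then Eq L k q (\<lambda>\<theta>. Wdist k \<theta>s m \<theta> + ennreal (B m))
        else if m = j then Eq L k q (\<lambda>\<theta>. Wdist k \<theta>s m \<theta> * (Wdist k \<theta>s m \<theta> + ennreal (B m)))
        else Eq L k q (\<lambda>\<theta>. (Wdist k \<theta>s m \<theta> + ennreal (B m))\<^sup>2))"
    proof (rule prod.cong[OF refl])
      fix m assume m: "m \<in> {..L}"
      show "(\<integral>\<^sup>+w. g2 j j' m w * ennreal (q m w) \<partial>layer_measure k m) = (if m < j' then 1 else if m = j' then Eq L k q (\<lambda>\<theta>. Wdist k \<theta>s m \<theta>)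
        else if m < j then Eq L k q (\<lambda>\<theta>. Wdist k \<theta>s m \<theta> + ennreal (B m))
        else if m = j then Eq L k q (\<lambda>\<theta>. Wdist k \<theta>s m \<theta> * (Wdist k \<theta>s m \<theta> + ennreal (B m)))
        else Eq L k q (\<lambda>\<theta>. (Wdist k \<theta>s m \<theta> + ennreal (B m))\<^sup>2))"
        using m q_norm by (auto simp: g2_def EWa EWb EWc EWd EWe)
    qed
    finally show ?thesis by (simp only: prodG2[OF jj j])
  qed
  have "Eq L k q (\<lambda>\<theta>. L2_dist_sq p (eta \<psi> L k \<theta>) (eta \<psi> L k \<theta>s))
      \<le> Eq L k q (\<lambda>\<theta>. (\<Sum>j\<le>L. Cc j * Wdist k \<theta>s j \<theta> * (\<Prod>m\<in>{Suc j..L}. (Wdist k \<theta>s m \<theta> + ennreal (B m))))^2)"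
    unfolding Cc_def by (rule Eq_mono, rule pointwise[OF k0 kL B lip psi_bd rowB])
  also have "\<dots> = Eq L k q (\<lambda>\<theta>. (\<Sum>j\<le>L. (Cc j)^2 * (\<Prod>m\<le>L. g1 j m (layer k \<theta> m)))
        + 2 * (\<Sum>j\<le>L. \<Sum>j'<j. Cc j * Cc j' * (\<Prod>m\<le>L. g2 j j' m (layer k \<theta> m))))"
    by (simp only: X)
  also have "\<dots> = (\<Sum>j\<le>L. (Cc j)^2 * Eq L k q (\<lambda>\<theta>. \<Prod>m\<le>L. g1 j m (layer k \<theta> m)))
        + 2 * (\<Sum>j\<le>L. \<Sum>j'<j. Cc j * Cc j' * Eq L k q (\<lambda>\<theta>. \<Prod>m\<le>L. g2 j j' m (layer k \<theta> m)))"
  proof -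
    have mA: "(\<lambda>\<theta>. (Cc j)^2 * (\<Prod>m\<le>L. g1 j m (layer k \<theta> m))) \<in> borel_measurable (param_measure L k)" for j
      using P1m by measurable
    have mB: "(\<lambda>\<theta>. Cc j * Cc j' * (\<Prod>m\<le>L. g2 j j' m (layer k \<theta> m))) \<in> borel_measurable (param_measure L k)" for j j'
      using P2m by measurable
    have mAs: "(\<lambda>\<theta>. \<Sum>j\<le>L. (Cc j)^2 * (\<Prod>m\<le>L. g1 j m (layer k \<theta> m))) \<in> borel_measurable (param_measure L k)"
      using mA by (intro borel_measurable_sum) auto
    have mBs: "(\<lambda>\<theta>. \<Sum>j'<j. Cc j * Cc j' * (\<Prod>m\<le>L. g2 j j' m (layer k \<theta> m))) \<in> borel_measurable (param_measure L k)" for j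
      using mB by (intro borel_measurable_sum) auto
    have mBss: "(\<lambda>\<theta>. \<Sum>j\<le>L. \<Sum>j'<j. Cc j * Cc j' * (\<Prod>m\<le>L. g2 j j' m (layer k \<theta> m))) \<in> borel_measurable (param_measure L k)"
      by (rule borel_measurable_sum) (rule mBs)
    have m2: "(\<lambda>\<theta>. 2 * (\<Sum>j\<le>L. \<Sum>j'<j. Cc j * Cc j' * (\<Prod>m\<le>L. g2 j j' m (layer k \<theta> m)))) \<in> borel_measurable (param_measure L k)"
      using mBss by measurable
    show ?thesis
      apply (subst Eq_add[OF q_meas mAs m2])
      apply (subst Eq_cmult[OF q_meas mBss])
      apply (subst Eq_sum[OF q_meas finite_atMost mA])
      apply (subst Eq_sum[OF q_meas finite_atMost mBs])
      apply (subst Eq_sum[OF q_meas finite_lessThan mB])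
      apply (simp add: Eq_cmult[OF q_meas P1m] Eq_cmult[OF q_meas P2m])
      done
  qed
  also have "(\<Sum>j\<le>L. (Cc j)^2 * Eq L k q (\<lambda>\<theta>. \<Prod>m\<le>L. g1 j m (layer k \<theta> m)))
      = (\<Sum>j\<le>L. (ennreal (\<Prod>m<j. B m))\<^sup>2 * Eq L k q (\<lambda>\<theta>. (Wdist k \<theta>s j \<theta>)\<^sup>2)
            * (\<Prod>m\<in>{Suc j..L}. Eq L k q (\<lambda>\<theta>. (Wdist k \<theta>s m \<theta> + ennreal (B m))\<^sup>2)))"
    by (intro sum.cong refl) (simp add: T1 Cc_def mult.assoc)
  also have "(\<Sum>j\<le>L. \<Sum>j'<j. Cc j * Cc j' * Eq L k q (\<lambda>\<theta>. \<Prod>m\<le>L. g2 j j' m (layer k \<theta> m)))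
      = (\<Sum>j\<le>L. \<Sum>j'<j. ennreal (\<Prod>m<j. B m) * ennreal (\<Prod>m<j'. B m)
            * Eq L k q (\<lambda>\<theta>. Wdist k \<theta>s j \<theta> * (Wdist k \<theta>s j \<theta> + ennreal (B j)))
            * (\<Prod>m\<in>{Suc j..L}. Eq L k q (\<lambda>\<theta>. (Wdist k \<theta>s m \<theta> + ennreal (B m))\<^sup>2))
            * Eq L k q (\<lambda>\<theta>. Wdist k \<theta>s j' \<theta>)
            * (\<Prod>m\<in>{Suc j'..<j}. Eq L k q (\<lambda>\<theta>. Wdist k \<theta>s m \<theta> + ennreal (B m))))"
    by (intro sum.cong refl) (simp add: T2 Cc_def mult_ac)
  finally show ?thesis .
qed

end
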